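(* Let $G$ be a chemical nontrivial cactus on $n$ vertices with $k$ cycles. Then \[R(G)\geq \frac{n}{2}-(k-1)\left(\frac{3}{2}-\sqrt 2\right),\] with equality when no two articulation points of $G$ are adjacent.
   Context: A graph is chemical if every vertex has degree at most $4$. A cactus is a connected graph in which any two cycles share at most one vertex; it is nontrivial if it has no bridges (edges whose removal disconnects the graph). An articulation point is a vertex whose removal disconnects the graph. The Randi\'c index is $R(G)=\sum_{uv\in E(G)}\frac{1}{\sqrt{d_ud_v}}$, where $d_v$ is the degree of $v$. *)

theory Defs
  imports Complex_Main
begin

definition simple_graph :: "'a set \<Rightarrow> 'a set set \<Rightarrow> bool" where
  "simple_graph V E \<longleftrightarrow> finite V \<and> (\<forall>e\<in>E. e \<subseteq> V \<and> card e = 2)"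

definition adj :: "'a set set \<Rightarrow> 'a \<Rightarrow> 'a \<Rightarrow> bool" where
  "adj E u v \<longleftrightarrow> u \<noteq> v \<and> {u, v} \<in> E"

definition degree :: "'a set set \<Rightarrow> 'a \<Rightarrow> nat" where
  "degree E v = card {e\<in>E. v \<in> e}"

definition reachable :: "'a set \<Rightarrow> 'a set set \<Rightarrow> 'a \<Rightarrow> 'a \<Rightarrow> bool" where
  "reachable V E = (\<lambda>x y. x \<in> V \<and> y \<in> V \<and> adj E x y)\<^sup>*\<^sup>*"

definition connected_graph :: "'a set \<Rightarrow> 'a set set \<Rightarrow> bool" where
  "connected_graph V E \<longleftrightarrow> V \<noteq> {} \<and> (\<forall>u\<in>V. \<forall>v\<in>V. reachable V E u v)"

definition is_cycle :: "'a set set \<Rightarrow> bool" where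
  "is_cycle C \<longleftrightarrow> C \<noteq> {} \<and> finite C \<and> (\<forall>e\<in>C. card e = 2)
      \<and> connected_graph (\<Union>C) C \<and> (\<forall>v\<in>\<Union>C. degree C v = 2)"

definition cycles :: "'a set set \<Rightarrow> 'a set set set" where
  "cycles E = {C. C \<subseteq> E \<and> is_cycle C}"

definition cactus :: "'a set \<Rightarrow> 'a set set \<Rightarrow> bool" where
  "cactus V E \<longleftrightarrow> connected_graph V E \<and>
     (\<forall>C1\<in>cycles E. \<forall>C2\<in>cycles E. C1 \<noteq> C2 \<longrightarrow> card (\<Union>C1 \<inter> \<Union>C2) \<le> 1)"

definition is_bridge :: "'a set \<Rightarrow> 'a set set \<Rightarrow> 'a set \<Rightarrow> bool" where
  "is_bridge V E e \<longleftrightarrow> e \<in> E \<and> \<not> connected_graph V (E - {e})"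

definition nontrivial_cactus :: "'a set \<Rightarrow> 'a set set \<Rightarrow> bool" where
  "nontrivial_cactus V E \<longleftrightarrow> cactus V E \<and> (\<forall>e\<in>E. \<not> is_bridge V E e)"

definition articulation_point :: "'a set \<Rightarrow> 'a set set \<Rightarrow> 'a \<Rightarrow> bool" where
  "articulation_point V E v \<longleftrightarrow> v \<in> V \<and>
     (\<exists>x\<in>V - {v}. \<exists>y\<in>V - {v}. \<not> reachable (V - {v}) {e\<in>E. v \<notin> e} x y)"

definition chemical :: "'a set \<Rightarrow> 'a set set \<Rightarrow> bool" where
  "chemical V E \<longleftrightarrow> (\<forall>v\<in>V. degree E v \<le> 4)"

definition randic :: "'a set set \<Rightarrow> real" where
  "randic E = (\<Sum>e\<in>E. 1 / sqrt (\<Prod>v\<in>e. real (degree E v)))"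

end

theory Submission
  imports Defs
begin

lemma reachable_mono:
  assumes "W \<subseteq> W'" "F \<subseteq> F'" "reachable W F x y"
  shows "reachable W' F' x y"
proof -
  have "(\<lambda>x y. x \<in> W \<and> y \<in> W \<and> adj F x y) \<le> (\<lambda>x y. x \<in> W' \<and> y \<in> W' \<and> adj F' x y)"
    using assms(1,2) by (auto simp: adj_def)
  then have "(\<lambda>x y. x \<in> W \<and> y \<in> W \<and> adj F x y)\<^sup>*\<^sup>* \<le> (\<lambda>x y. x \<in> W' \<and> y \<in> W' \<and> adj F' x y)\<^sup>*\<^sup>*"
    by (rule rtranclp_mono)
  then show ?thesis using assms(3) unfolding reachable_def by auto
qed

lemma reachable_sym:
  assumes "reachable W F x y" shows "reachable W F y x"
  using assms unfolding reachable_def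
  by (induction rule: rtranclp_induct)
     (auto simp: adj_def insert_commute intro: converse_rtranclp_into_rtranclp)

lemma reachable_trans:
  "reachable W F x y \<Longrightarrow> reachable W F y z \<Longrightarrow> reachable W F x z"
  unfolding reachable_def by (rule rtranclp_trans)

lemma reachable_refl: "reachable W F x x"
  unfolding reachable_def by simp

lemma reachable_edge:
  "x \<in> W \<Longrightarrow> y \<in> W \<Longrightarrow> x \<noteq> y \<Longrightarrow> {x, y} \<in> F \<Longrightarrow> reachable W F x y"
  unfolding reachable_def by (rule r_into_rtranclp) (simp add: adj_def)

definition epath :: "'a set set \<Rightarrow> 'a list \<Rightarrow> bool" where
  "epath F xs \<longleftrightarrow> distinct xs \<and> (\<forall>i. Suc i < length xs \<longrightarrow> {xs!i, xs!Suc i} \<in> F)"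

definition cyc :: "'a list \<Rightarrow> 'a set set" where
  "cyc xs = (\<lambda>i. {xs!i, xs!(Suc i mod length xs)}) ` {..<length xs}"

lemma epath_drop: assumes "epath F xs" shows "epath F (drop k xs)"
  unfolding epath_def
proof (intro conjI allI impI)
  show "distinct (drop k xs)" using assms by (simp add: epath_def)
  fix i assume "Suc i < length (drop k xs)"
  then show "{drop k xs ! i, drop k xs ! Suc i} \<in> F"
    using assms unfolding epath_def by (simp add: nth_drop add.commute[of k])
qed

lemma cyc_union: assumes "xs \<noteq> []" shows "\<Union>(cyc xs) = set xs"
proof
  show "\<Union>(cyc xs) \<subseteq> set xs" using assms unfolding cyc_def by (auto intro!: nth_mem)
  show "set xs \<subseteq> \<Union>(cyc xs)"
  proof
    fix x assume "x \<in> set xs"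
    then obtain j where "j < length xs" "xs!j = x" by (auto simp: in_set_conv_nth)
    then show "x \<in> \<Union>(cyc xs)" unfolding cyc_def by auto
  qed
qed

lemma cyc_sub:
  assumes "epath F xs" "length xs \<ge> 2" "{last xs, hd xs} \<in> F"
  shows "cyc xs \<subseteq> F"
proof
  fix e assume "e \<in> cyc xs"
  then obtain i where i: "i < length xs" "e = {xs!i, xs!(Suc i mod length xs)}" unfolding cyc_def by auto
  show "e \<in> F"
  proof (cases "Suc i < length xs")
    case True then show ?thesis using i assms(1) unfolding epath_def by auto
  next
    case False
    then have "Suc i = length xs" using i by auto
    moreover have "xs \<noteq> []" using assms(2) by auto
    moreover have "last xs = xs!i" "hd xs = xs!0" using \<open>xs \<noteq> []\<close> \<open>Suc i = length xs\<close>
      by (auto simp: last_conv_nth hd_conv_nth simp flip: \<open>Suc i = length xs\<close>)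
    ultimately have "e = {last xs, hd xs}" using i by auto
    then show ?thesis using assms(3) by simp
  qed
qed

lemma mod_pred_aux:
  assumes "i < l" "j = Suc i mod l"
  shows "i = (j + l - 1) mod l"
proof (cases "Suc i < l")
  case True then show ?thesis using assms by simp
next
  case False then have "Suc i = l" using assms by simp
  then show ?thesis using assms by simp
qed

lemma mod_succ_pred:
  assumes "j < l"
  shows "Suc ((j + l - 1) mod l) mod l = j"
proof -
  have "Suc ((j + l - 1) mod l) mod l = Suc (j + l - 1) mod l" by (simp add: mod_Suc_eq)
  also have "Suc (j + l - 1) = j + l" using assms by simp
  finally show ?thesis using assms by simp
qed

lemma mod_ne_aux:
  assumes "j < l" "l \<ge> 3"
  shows "Suc j mod l \<noteq> (j + l - 1) mod l"
proof (cases "Suc j < l")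
  case True
  show ?thesis
  proof (cases j)
    case 0 then show ?thesis using True assms by simp
  next
    case (Suc j')
    then have "(j + l - 1) mod l = j'"
      using assms by (simp add: le_mod_geq)
    then show ?thesis using True Suc by simp
  qed
next
  case False
  then have "Suc j = l" using assms by simp
  then have "(j + l - 1) mod l = l - 2" using assms by (simp add: le_mod_geq)
  then show ?thesis using \<open>Suc j = l\<close> assms by simp
qed

lemma cyc_is_cycle:
  assumes d: "distinct xs" and l3: "length xs \<ge> 3"
  shows "is_cycle (cyc xs)"
proof -
  let ?l = "length xs"
  let ?E = "\<lambda>i. {xs!i, xs!(Suc i mod ?l)}"
  have ne: "xs \<noteq> []" using l3 by auto
  have idx: "\<And>i j. i < ?l \<Longrightarrow> j < ?l \<Longrightarrow> xs!i = xs!j \<longleftrightarrow> i = j"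
    using d by (simp add: nth_eq_iff_index_eq)
  have sne: "\<And>i. i < ?l \<Longrightarrow> Suc i mod ?l \<noteq> i"
  proof -
    fix i assume "i < ?l"
    show "Suc i mod ?l \<noteq> i"
    proof (cases "Suc i < ?l")
      case True then show ?thesis by simp
    next
      case False
      then have si: "Suc i = ?l" using \<open>i < ?l\<close> by simp
      then have "Suc i mod ?l = 0" by simp
      then show ?thesis using l3 si by simp
    qed
  qed
  have c2: "\<forall>e\<in>cyc xs. card e = 2"
  proof
    fix e assume "e \<in> cyc xs"
    then obtain i where i: "i < ?l" "e = ?E i" unfolding cyc_def by auto
    have "Suc i mod ?l < ?l" using ne by simp
    then have "xs!i \<noteq> xs!(Suc i mod ?l)" using idx i sne by metis
    then show "card e = 2" using i by simp
  qed
  have un: "\<Union>(cyc xs) = set xs" using cyc_union ne by blast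
  have deg: "degree (cyc xs) v = 2" if "v \<in> set xs" for v
  proof -
    obtain j where j: "j < ?l" "xs!j = v" using \<open>v \<in> set xs\<close> by (auto simp: in_set_conv_nth)
    let ?p = "(j + ?l - 1) mod ?l"
    have pl: "?p < ?l" using ne by simp
    have sl: "Suc j mod ?l < ?l" using ne by simp
    have "{e \<in> cyc xs. v \<in> e} = {?E j, ?E ?p}"
    proof
      show "{e \<in> cyc xs. v \<in> e} \<subseteq> {?E j, ?E ?p}"
      proof
        fix e assume "e \<in> {e \<in> cyc xs. v \<in> e}"
        then obtain i where i: "i < ?l" "e = ?E i" "v \<in> ?E i" unfolding cyc_def by auto
        have "Suc i mod ?l < ?l" using ne by simp
        then have "j = i \<or> j = Suc i mod ?l" using i j idx by auto
        then have "i = j \<or> i = ?p" using mod_pred_aux[OF i(1)] by auto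
        then show "e \<in> {?E j, ?E ?p}" using i by auto
      qed
      show "{?E j, ?E ?p} \<subseteq> {e \<in> cyc xs. v \<in> e}"
        using j pl mod_succ_pred[OF j(1)] unfolding cyc_def by auto
    qed
    moreover have "?E j \<noteq> ?E ?p"
    proof
      assume eq: "?E j = ?E ?p"
      have "xs!(Suc j mod ?l) \<noteq> xs!j" using idx sne j sl by metis
      have "?E ?p = {xs!?p, xs!j}" using mod_succ_pred[OF j(1)] by simp
      then have "{xs!j, xs!(Suc j mod ?l)} = {xs!?p, xs!j}" using eq by simp
      then have "xs!(Suc j mod ?l) = xs!?p" using \<open>xs!(Suc j mod ?l) \<noteq> xs!j\<close>
        by (auto simp: doubleton_eq_iff)
      then have "Suc j mod ?l = ?p" using idx sl pl by blast
      then show False using mod_ne_aux[OF j(1) l3] by simp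
    qed
    ultimately show ?thesis unfolding degree_def by simp
  qed
  have r0: "reachable (set xs) (cyc xs) (xs!0) (xs!i)" if "i < ?l" for i
    using that
  proof (induction i)
    case 0 show ?case by (rule reachable_refl)
  next
    case (Suc i)
    have "?E i \<in> cyc xs" using Suc by (auto simp: cyc_def)
    moreover have "Suc i mod ?l = Suc i" using Suc by simp
    ultimately have "{xs!i, xs!Suc i} \<in> cyc xs" by simp
    moreover have "xs!i \<noteq> xs!Suc i" using idx Suc by fastforce
    ultimately have "reachable (set xs) (cyc xs) (xs!i) (xs!Suc i)"
      using Suc by (intro reachable_edge) auto
    then show ?case using Suc reachable_trans by fastforce
  qed
  have conn: "connected_graph (set xs) (cyc xs)"
    unfolding connected_graph_def
  proof (intro conjI ballI)
    show "set xs \<noteq> {}" using ne by simp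
    fix u v assume "u \<in> set xs" "v \<in> set xs"
    then obtain i j where "i < ?l" "u = xs!i" "j < ?l" "v = xs!j" by (auto simp: in_set_conv_nth)
    then show "reachable (set xs) (cyc xs) u v"
      using r0 reachable_sym reachable_trans by metis
  qed
  show ?thesis unfolding is_cycle_def
    using c2 un deg conn ne by (auto simp: cyc_def)
qed

lemma reach_path:
  assumes "reachable W F x y"
  shows "\<exists>xs. epath F xs \<and> xs \<noteq> [] \<and> hd xs = x \<and> last xs = y"
  using assms unfolding reachable_def
proof (induction rule: converse_rtranclp_induct)
  case base show ?case by (rule exI[of _ "[y]"]) (simp add: epath_def)
next
  case (step x z)
  from step.IH obtain xs where xs: "epath F xs" "xs \<noteq> []" "hd xs = z" "last xs = y" by blast
  from step.hyps(1) have e: "{x,z} \<in> F" "x \<noteq> z" by (auto simp: adj_def)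
  show ?case
  proof (cases "x \<in> set xs")
    case True
    then obtain k where k: "k < length xs" "xs!k = x" by (auto simp: in_set_conv_nth)
    have "epath F (drop k xs)" using xs(1) by (rule epath_drop)
    moreover have "drop k xs \<noteq> []" using k by simp
    moreover have "hd (drop k xs) = x" using k by (simp add: hd_drop_conv_nth)
    moreover have "last (drop k xs) = y" using k xs by simp
    ultimately show ?thesis by blast
  next
    case False
    have "epath F (x # xs)"
      unfolding epath_def
    proof (intro conjI allI impI)
      show "distinct (x#xs)" using False xs(1) by (simp add: epath_def)
      fix i assume i: "Suc i < length (x#xs)"
      show "{(x#xs)!i, (x#xs)!Suc i} \<in> F"
      proof (cases i)
        case 0 then show ?thesis using e xs(2,3) by (simp add: hd_conv_nth)
      next
        case (Suc i') then show ?thesis using xs(1) i by (simp add: epath_def)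
      qed
    qed
    then show ?thesis using xs by (intro exI[of _ "x#xs"]) auto
  qed
qed

lemma epath_set:
  assumes "epath F xs" "length xs \<ge> 2" shows "set xs \<subseteq> \<Union>F"
proof
  fix v assume "v \<in> set xs"
  then obtain j where j: "j < length xs" "xs!j = v" by (auto simp: in_set_conv_nth)
  show "v \<in> \<Union>F"
  proof (cases "Suc j < length xs")
    case True then have "{xs!j, xs!Suc j} \<in> F" using assms(1) by (simp add: epath_def)
    then show ?thesis using j by blast
  next
    case False then have "Suc (j - 1) < length xs" "Suc (j-1) = j" using j assms(2) by auto
    then have "{xs!(j-1), xs!j} \<in> F" using assms(1) unfolding epath_def by metis
    then show ?thesis using j by blast
  qed
qed

lemma fin_union2: "finite F \<Longrightarrow> \<forall>e\<in>F. card e = 2 \<Longrightarrow> finite (\<Union>F)"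
  by (metis card.infinite finite_Union zero_neq_numeral)

lemma card_ge2_obtain:
  assumes "finite A" "2 \<le> card A" obtains a b where "a \<in> A" "b \<in> A" "a \<noteq> b"
proof -
  have "\<not> card A \<le> Suc 0" using assms(2) by simp
  then show ?thesis using that card_le_Suc0_iff_eq[OF assms(1)] by blast
qed

lemma edge_other:
  assumes "card e = 2" "z \<in> e" shows "\<exists>y. e = {z,y} \<and> y \<noteq> z"
proof -
  obtain p q where pq: "e = {p,q}" "p \<noteq> q" using assms(1) card_2_iff by metis
  show ?thesis
  proof (cases "z = p")
    case True then show ?thesis using pq by auto
  next
    case False then have "z = q" using pq assms(2) by auto
    then show ?thesis using pq by (intro exI[of _ p]) auto
  qed
qed

lemma mindeg2_cycle:
  assumes fin: "finite F" and c2: "\<forall>e\<in>F. card e = 2" and ne: "F \<noteq> {}"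
    and deg: "\<forall>w\<in>\<Union>F. degree F w \<ge> 2"
  shows "\<exists>C\<subseteq>F. is_cycle C"
proof -
  have fU: "finite (\<Union>F)" using fin c2 by (rule fin_union2)
  let ?P = "\<lambda>xs. epath F xs \<and> length xs \<ge> 2"
  have bnd: "length xs \<le> card (\<Union>F)" if "?P xs" for xs
  proof -
    have "length xs = card (set xs)" using that by (simp add: epath_def distinct_card)
    also have "\<dots> \<le> card (\<Union>F)" using epath_set that fU by (intro card_mono) auto
    finally show ?thesis .
  qed
  obtain e where "e \<in> F" using ne by blast
  then obtain a b where ab: "e = {a,b}" "a \<noteq> b" using c2 card_2_iff by metis
  have P2: "?P [a,b]" using ab \<open>e\<in>F\<close> by (auto simp: epath_def less_Suc_eq)
  have "\<exists>xs. ?P xs \<and> (\<forall>ys. ?P ys \<longrightarrow> length ys \<le> length xs)"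
    by (rule ex_has_greatest_nat[where k="[a,b]" and b="Suc (card (\<Union>F))"]) (use P2 bnd in force)+
  then obtain xs where xs: "?P xs" and mx: "\<And>ys. ?P ys \<Longrightarrow> length ys \<le> length xs" by blast
  define l where "l = length xs"
  define z where "z = xs!(l-1)"
  define w where "w = xs!(l-2)"
  have d: "distinct xs" using xs by (simp add: epath_def)
  have l2: "l \<ge> 2" using xs l_def by simp
  have zU: "z \<in> \<Union>F" using epath_set[of F xs] xs l2 unfolding z_def l_def
    by (metis diff_less nth_mem pos2 order_less_le_trans subsetD zero_less_one)
  have "degree F z \<ge> 2" using deg zU by blast
  then have c2z: "2 \<le> card {e\<in>F. z\<in>e}" by (simp add: degree_def)
  have fz: "finite {e\<in>F. z\<in>e}" using fin by simp
  obtain e1 e2 where e1: "e1 \<in> {e\<in>F. z\<in>e}" and e2: "e2 \<in> {e\<in>F. z\<in>e}" and e12: "e1 \<noteq> e2"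
    by (rule card_ge2_obtain[OF fz c2z])
  have "card e1 = 2" "z \<in> e1" "card e2 = 2" "z \<in> e2" using c2 e1 e2 by auto
  then obtain y1 y2 where y1: "e1 = {z,y1}" "y1 \<noteq> z" and y2: "e2 = {z,y2}" "y2 \<noteq> z"
    using edge_other by metis
  have "y1 \<noteq> y2" using y1 y2 e12 by auto
  have "\<exists>y. {z,y} \<in> F \<and> y \<noteq> z \<and> y \<noteq> w"
  proof (cases "y1 = w")
    case True then show ?thesis using y2 e2 \<open>y1 \<noteq> y2\<close> by (intro exI[of _ y2]) auto
  next
    case False then show ?thesis using y1 e1 by (intro exI[of _ y1]) auto
  qed
  then obtain y where y: "{z,y} \<in> F" "y \<noteq> z" "y \<noteq> w" by blast
  have "y \<in> set xs"
  proof (rule ccontr)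
    assume ny: "y \<notin> set xs"
    have "epath F (xs @ [y])"
      unfolding epath_def
    proof (intro conjI allI impI)
      show "distinct (xs @ [y])" using d ny by simp
      fix i assume i: "Suc i < length (xs @ [y])"
      show "{(xs@[y])!i, (xs@[y])!Suc i} \<in> F"
      proof (cases "Suc i < l")
        case True then show ?thesis using xs l_def by (simp add: nth_append epath_def)
      next
        case False then have "i = l - 1" using i l_def by simp
        then have "(xs@[y])!i = z" "(xs@[y])!Suc i = y" using l2 l_def z_def by (auto simp: nth_append)
        then show ?thesis using y by simp
      qed
    qed
    then have "epath F (xs @ [y]) \<and> 2 \<le> length (xs @ [y])" using xs by simp
    then have "length (xs@[y]) \<le> length xs" by (rule mx)
    then show False by simp
  qed
  then obtain j where j: "j < l" "xs!j = y" by (auto simp: in_set_conv_nth l_def)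
  have "j \<noteq> l - 1" using j y z_def by auto
  moreover have "j \<noteq> l - 2" using j y w_def by auto
  ultimately have j3: "j + 3 \<le> l" using j by linarith
  let ?ys = "drop j xs"
  have ep: "epath F ?ys" using xs by (simp add: epath_drop)
  have ly: "length ?ys \<ge> 3" using j3 l_def by simp
  have hy: "hd ?ys = y" using j l_def by (simp add: hd_drop_conv_nth)
  have "xs \<noteq> []" using l2 l_def by auto
  then have "last xs = z" using l2 l_def z_def by (simp add: last_conv_nth)
  then have lz: "last ?ys = z" using j l_def by simp
  have "cyc ?ys \<subseteq> F" using ep ly hy lz y(1) by (intro cyc_sub) (auto simp: insert_commute)
  moreover have "is_cycle (cyc ?ys)" using ep ly by (intro cyc_is_cycle) (auto simp: epath_def)
  ultimately show ?thesis by blast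
qed

lemma forest_bound:
  "finite F \<Longrightarrow> \<forall>e\<in>F. card e = 2 \<Longrightarrow> \<not>(\<exists>C\<subseteq>F. is_cycle C) \<Longrightarrow> F \<noteq> {}
   \<Longrightarrow> card F + 1 \<le> card (\<Union>F)"
proof (induction "card F" arbitrary: F rule: less_induct)
  case less
  have fU: "finite (\<Union>F)" using less.prems fin_union2 by blast
  obtain w where w: "w \<in> \<Union>F" "degree F w < 2"
    using mindeg2_cycle[of F] less.prems by (meson not_le)
  have fin1: "finite {e\<in>F. w\<in>e}" using less.prems by simp
  have "{e\<in>F. w\<in>e} \<noteq> {}" using w by auto
  then have "card {e\<in>F. w\<in>e} = 1" using w fin1 unfolding degree_def
    by (metis One_nat_def card_0_eq less_2_cases)
  then obtain f where f: "{e\<in>F. w\<in>e} = {f}" by (rule card_1_singletonE)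
  then have fF: "f \<in> F" "w \<in> f" and uni: "\<And>e. e \<in> F \<Longrightarrow> w \<in> e \<Longrightarrow> e = f" by auto
  show ?case
  proof (cases "F - {f} = {}")
    case True
    then have "F = {f}" using fF by auto
    then show ?thesis using less.prems by simp
  next
    case False
    have lt: "card (F - {f}) < card F" using fF less.prems by (metis card_Diff1_less)
    have "card (F - {f}) + 1 \<le> card (\<Union>(F - {f}))"
      using less.hyps[OF lt] less.prems False by blast
    moreover have "\<Union>(F - {f}) \<subseteq> \<Union>F - {w}" using uni by auto
    then have "card (\<Union>(F - {f})) \<le> card (\<Union>F - {w})" using fU by (intro card_mono) auto
    moreover have "card (\<Union>F - {w}) = card (\<Union>F) - 1" using w fU by simp
    moreover have "card F = card (F - {f}) + 1" using fF less.prems lt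
      by (simp add: card_Diff_singleton)
    moreover have "card (\<Union>F) \<ge> 1" using w fU by (metis One_nat_def Suc_leI card_gt_0_iff empty_iff)
    ultimately show ?thesis by linarith
  qed
qed

lemma conn_lower:
  assumes "finite V" "finite E" "connected_graph V E"
  shows "card V \<le> card E + 1"
proof -
  obtain r where r: "r \<in> V" using assms(3) by (auto simp: connected_graph_def)
  define R where "R = (\<lambda>x y. x \<in> V \<and> y \<in> V \<and> adj E x y)"
  have ex: "\<exists>n. (R^^n) v r" if "v\<in>V" for v
    using assms(3) that r unfolding connected_graph_def reachable_def R_def
    by (simp add: rtranclp_power)
  define d where "d v = (LEAST n. (R^^n) v r)" for v
  have dR: "(R^^d v) v r" if "v\<in>V" for v using ex[OF that] unfolding d_def by (rule LeastI_ex)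
  have dmin: "d v \<le> n" if "(R^^n) v r" for v n unfolding d_def using that by (rule Least_le)
  have step: "\<exists>y. R v y \<and> d y < d v" if vV: "v \<in> V" "v \<noteq> r" for v
  proof -
    have "d v \<noteq> 0" using dR[OF vV(1)] vV(2) by (metis relpowp_0_E)
    then obtain m where m: "d v = Suc m" by (cases "d v") auto
    then obtain y where y: "R v y" "(R^^m) y r" using dR[OF vV(1)] relpowp_Suc_E2 by metis
    then show ?thesis using dmin[OF y(2)] m by auto
  qed
  define p where "p v = (SOME y. R v y \<and> d y < d v)" for v
  have pP: "R v (p v) \<and> d (p v) < d v" if "v\<in>V" "v\<noteq>r" for v
    using someI_ex[OF step[OF that]] unfolding p_def .
  have "inj_on (\<lambda>v. {v, p v}) (V - {r})"
  proof (rule inj_onI)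
    fix v u assume v: "v \<in> V-{r}" and u: "u\<in>V-{r}" and eq: "{v, p v} = {u, p u}"
    show "v = u"
    proof (rule ccontr)
      assume "v \<noteq> u"
      then have "v = p u" "u = p v" using eq by (auto simp: doubleton_eq_iff)
      moreover have "d (p u) < d u" "d (p v) < d v" using pP[of u] pP[of v] v u by auto
      ultimately show False by simp
    qed
  qed
  moreover have "(\<lambda>v. {v, p v}) ` (V - {r}) \<subseteq> E" using pP by (auto simp: R_def adj_def)
  ultimately have "card (V - {r}) \<le> card E" using assms(2) by (metis card_inj_on_le)
  then show ?thesis using r assms(1) by simp
qed

lemma double_count:
  fixes h :: "'a \<Rightarrow> 'b::comm_semiring_1"
  assumes "finite K" "finite F"
  shows "(\<Sum>v\<in>K. of_nat (degree F v) * h v) = (\<Sum>e\<in>F. \<Sum>v\<in>K\<inter>e. h v)"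
proof -
  have "(\<Sum>v\<in>K. of_nat (degree F v) * h v) = (\<Sum>v\<in>K. \<Sum>e\<in>F. if v\<in>e then h v else 0)"
  proof (rule sum.cong[OF refl])
    fix v assume "v\<in>K"
    have "(\<Sum>e\<in>F. if v\<in>e then h v else 0) = (\<Sum>e\<in>{e\<in>F. v\<in>e}. h v)"
      using assms(2) by (rule sum.inter_filter[symmetric])
    also have "\<dots> = of_nat (degree F v) * h v" by (simp add: degree_def)
    finally show "of_nat (degree F v) * h v = (\<Sum>e\<in>F. if v\<in>e then h v else 0)" by simp
  qed
  also have "\<dots> = (\<Sum>e\<in>F. \<Sum>v\<in>K. if v\<in>e then h v else 0)" by (rule sum.swap)
  also have "\<dots> = (\<Sum>e\<in>F. \<Sum>v\<in>K\<inter>e. h v)"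
  proof (rule sum.cong[OF refl])
    fix e assume "e\<in>F"
    have "(\<Sum>v\<in>K. if v\<in>e then h v else 0) = (\<Sum>v\<in>{v\<in>K. v\<in>e}. h v)"
      using assms(1) by (rule sum.inter_filter[symmetric])
    also have "{v\<in>K. v\<in>e} = K\<inter>e" by auto
    finally show "(\<Sum>v\<in>K. if v\<in>e then h v else 0) = (\<Sum>v\<in>K\<inter>e. h v)" .
  qed
  finally show ?thesis .
qed

lemma cycle_minus_edge:
  assumes C: "is_cycle C" and s: "s \<in> C" "s = {x,y}" "x \<noteq> y"
  shows "reachable (\<Union>C) (C - {s}) x y"
proof (rule ccontr)
  assume nr: "\<not> ?thesis"
  let ?U = "\<Union>C" let ?F = "C - {s}"
  define K where "K = {w\<in>?U. reachable ?U ?F x w}"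
  have finC: "finite C" and c2: "\<forall>e\<in>C. card e = 2" and dg: "\<forall>v\<in>?U. degree C v = 2"
    using C by (auto simp: is_cycle_def)
  have fU: "finite ?U" using finC c2 by (rule fin_union2)
  have fK: "finite K" by (rule finite_subset[OF _ fU]) (auto simp: K_def)
  have xK: "x \<in> K" using s by (auto simp: K_def reachable_refl)
  have yK: "y \<notin> K" using nr K_def by auto
  have clos: "e \<subseteq> K" if eF: "e \<in> ?F" "a \<in> e" "a \<in> K" for e a
  proof
    fix b assume "b \<in> e"
    show "b \<in> K"
    proof (cases "b = a")
      case True then show ?thesis using eF by simp
    next
      case False
      have "card e = 2" using c2 eF(1) by auto
      then obtain q where q: "e = {a,q}" "q \<noteq> a" using edge_other eF(2) by metis
      then have "b = q" using \<open>b \<in> e\<close> False by auto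
      then have "reachable ?U ?F a b" using q eF(1)
        by (intro reachable_edge) auto
      moreover have "reachable ?U ?F x a" using eF(3) K_def by simp
      ultimately have "reachable ?U ?F x b" using reachable_trans by metis
      moreover have "b \<in> ?U" using \<open>b\<in>e\<close> eF(1) by blast
      ultimately show ?thesis using K_def by simp
    qed
  qed
  have ev: "even (\<Sum>e\<in>?F. card (K\<inter>e))"
  proof (rule dvd_sum)
    fix e assume "e \<in> ?F"
    show "2 dvd card (K\<inter>e)"
    proof (cases "K \<inter> e = {}")
      case True then show ?thesis by simp
    next
      case False then obtain a where "a\<in>K" "a\<in>e" by blast
      then have "e \<subseteq> K" using clos \<open>e\<in>?F\<close> by blast
      then have "K\<inter>e = e" by blast
      then show ?thesis using c2 \<open>e\<in>?F\<close> by simp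
    qed
  qed
  have "(\<Sum>v\<in>K. of_nat (degree ?F v) * (1::nat)) = (\<Sum>e\<in>?F. \<Sum>v\<in>K\<inter>e. (1::nat))"
    using double_count[OF fK, where F="?F" and h="\<lambda>_. (1::nat)"] finC by simp
  then have eq: "(\<Sum>v\<in>K. degree ?F v) = (\<Sum>e\<in>?F. card (K\<inter>e))" by simp
  have degK: "degree ?F v = (if v = x then 1 else 2)" if "v\<in>K" for v
  proof -
    have A: "{e\<in>?F. v\<in>e} = {e\<in>C. v\<in>e} - {s}" by auto
    have vU: "v \<in> ?U" using that K_def by simp
    have c: "card {e\<in>C. v\<in>e} = 2" using dg vU unfolding degree_def by blast
    have fA: "finite {e\<in>C. v\<in>e}" using finC by simp
    show ?thesis
    proof (cases "v = x")
      case True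
      then have "s \<in> {e\<in>C. v\<in>e}" using s by simp
      then show ?thesis using A c fA True by (simp add: degree_def)
    next
      case False
      then have "v \<notin> s" using s that yK by auto
      then have "{e\<in>?F. v\<in>e} = {e\<in>C. v\<in>e}" by auto
      then show ?thesis using c False by (simp add: degree_def)
    qed
  qed
  have "(\<Sum>v\<in>K. degree ?F v) = (\<Sum>v\<in>K. if v = x then 1 else 2)"
    using degK by (intro sum.cong) auto
  also have "\<dots> = (if x = x then 1 else 2) + (\<Sum>v\<in>K-{x}. if v = x then 1 else (2::nat))"
    by (rule sum.remove[OF fK xK])
  also have "(\<Sum>v\<in>K-{x}. if v = x then 1 else (2::nat)) = (\<Sum>v\<in>K-{x}. 2)"
    by (intro sum.cong) auto
  finally have "(\<Sum>v\<in>K. degree ?F v) = 1 + 2 * card (K - {x})" by simp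
  then show False using ev eq by simp
qed

lemma cyc_count:
  assumes finW: "finite W" and es: "\<forall>e\<in>F. e \<subseteq> W \<and> card e = 2"
    and conn: "connected_graph W F"
    and disj: "\<forall>C1\<in>cycles F. \<forall>C2\<in>cycles F. C1 \<noteq> C2 \<longrightarrow> C1 \<inter> C2 = {}"
  shows "card W + card (cycles F) = card F + 1"
proof -
  have "F \<subseteq> Pow W" using es by auto
  then have finF: "finite F" using finite_subset finW by (metis finite_Pow_iff)
  define f where "f C = (SOME e. e \<in> C)" for C :: "'a set set"
  have fC: "f C \<in> C" if "C \<in> cycles F" for C
  proof -
    have "C \<noteq> {}" using that by (simp add: cycles_def is_cycle_def)
    then obtain e0 where "e0 \<in> C" by blast
    then show ?thesis unfolding f_def by (rule someI)
  qed
  have inj: "inj_on f (cycles F)"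
  proof (rule inj_onI)
    fix C1 C2 assume a: "C1 \<in> cycles F" "C2 \<in> cycles F" "f C1 = f C2"
    show "C1 = C2"
    proof (rule ccontr)
      assume "C1 \<noteq> C2"
      then have "C1 \<inter> C2 = {}" using disj a by auto
      moreover have "f C1 \<in> C1 \<inter> C2" using fC[OF a(1)] fC[OF a(2)] a(3) by auto
      ultimately show False by auto
    qed
  qed
  define S where "S = f ` cycles F"
  have cS: "card S = card (cycles F)" using inj S_def card_image by blast
  have SF: "S \<subseteq> F" using fC S_def by (auto simp: cycles_def)
  define F' where "F' = F - S"
  have cF': "card F' = card F - card S" using SF finF F'_def by (simp add: card_Diff_subset finite_subset)
  have SleF: "card S \<le> card F" using SF finF by (simp add: card_mono)
  have finF': "finite F'" using finF F'_def by simp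
  have keep: "reachable W F' a b" if "reachable W F a b" for a b
    using that unfolding reachable_def[of W F]
  proof (induction rule: rtranclp_induct)
    case base show ?case by (rule reachable_refl)
  next
    case (step b c)
    have bc: "b \<in> W" "c \<in> W" "b \<noteq> c" "{b,c} \<in> F" using step.hyps(2) by (auto simp: adj_def)
    have "reachable W F' b c"
    proof (cases "{b,c} \<in> S")
      case False
      then have "{b,c} \<in> F'" using bc F'_def by simp
      then show ?thesis using bc by (intro reachable_edge) auto
    next
      case True
      then obtain C where C: "C \<in> cycles F" "{b,c} = f C" using S_def by auto
      have cyc: "is_cycle C" "C \<subseteq> F" using C by (auto simp: cycles_def)
      have r1: "reachable (\<Union>C) (C - {f C}) b c"
        using cycle_minus_edge[OF cyc(1) fC[OF C(1)] C(2)[symmetric] bc(3)] .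
      have r2: "\<Union>C \<subseteq> W" using cyc es by blast
      have r3: "C - {f C} \<subseteq> F'"
      proof
        fix e assume e: "e \<in> C - {f C}"
        show "e \<in> F'"
        proof (rule ccontr)
          assume "e \<notin> F'"
          then have "e \<in> S" using e cyc F'_def by auto
          then obtain C' where C': "C' \<in> cycles F" "e = f C'" using S_def by auto
          then have "C' \<noteq> C" using e by auto
          have "C \<inter> C' = {}" using disj C(1) C'(1) \<open>C' \<noteq> C\<close> by auto
          moreover have "e \<in> C \<inter> C'" using e fC[OF C'(1)] C'(2) by auto
          ultimately show False by auto
        qed
      qed
      show ?thesis by (rule reachable_mono[OF r2 r3 r1])
    qed
    with step.IH show ?case by (rule reachable_trans)
  qed
  have conn': "connected_graph W F'"
    unfolding connected_graph_def
  proof (intro conjI ballI)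
    show "W \<noteq> {}" using conn by (simp add: connected_graph_def)
    fix u v assume "u \<in> W" "v \<in> W"
    then have "reachable W F u v" using conn by (simp add: connected_graph_def)
    then show "reachable W F' u v" by (rule keep)
  qed
  have lower: "card W \<le> card F' + 1" using conn_lower[OF finW finF' conn'] .
  have acyc: "\<not> (\<exists>C\<subseteq>F'. is_cycle C)"
  proof
    assume "\<exists>C\<subseteq>F'. is_cycle C"
    then obtain C where C: "C \<subseteq> F'" "is_cycle C" by blast
    then have "C \<in> cycles F" using F'_def by (auto simp: cycles_def)
    then have "f C \<in> C" "f C \<in> S" using fC S_def by auto
    then show False using C F'_def by auto
  qed
  have upper: "card F' + 1 \<le> card W"
  proof (cases "F' = {}")
    case True
    then show ?thesis using conn finW by (simp add: connected_graph_def Suc_leI card_gt_0_iff)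
  next
    case False
    have "card F' + 1 \<le> card (\<Union>F')"
      using forest_bound[OF finF' _ acyc False] es F'_def by auto
    also have "\<dots> \<le> card W" using es F'_def finW by (intro card_mono) auto
    finally show ?thesis .
  qed
  show ?thesis using lower upper cF' cS SleF by linarith
qed

lemma edge_val:
  fixes dx dy :: nat
  assumes "dx = 2 \<or> dx = 4" "dy = 2 \<or> dy = 4"
  defines "g \<equiv> \<lambda>d::nat. if d = 4 then (sqrt 2 - 1) / 4 else (1/4::real)"
  shows "g dx + g dy \<le> 1 / sqrt (real dx * real dy)
         \<and> (\<not> (dx = 4 \<and> dy = 4) \<longrightarrow> g dx + g dy = 1 / sqrt (real dx * real dy))"
proof -
  have s4: "sqrt 4 = 2" by (simp add: real_sqrt_eq_iff)
  have s2: "sqrt 2 * sqrt 2 = 2" by simp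
  have s8: "sqrt 8 = 2 * sqrt 2"
  proof -
    have "sqrt 8 = sqrt (4 * 2)" by simp
    also have "\<dots> = sqrt 4 * sqrt 2" by (rule real_sqrt_mult)
    finally show ?thesis using s4 by simp
  qed
  have s16: "sqrt 16 = 4" by (simp add: real_sqrt_eq_iff)
  have sle: "sqrt 2 \<le> 3/2"
    by (rule real_le_lsqrt) (auto simp: power2_eq_square)
  have pos: "sqrt 2 > 0" by simp
  have e24: "(sqrt 2 - 1) / 4 + 1/4 = 1 / sqrt 8"
    using s8 s2 pos by (simp add: field_simps)
  have "2 * sqrt 2 \<le> 3" using sle by linarith
  then have q44: "(sqrt 2 - 1)/4 + (sqrt 2 - 1)/4 \<le> (1/4::real)" by (simp add: field_simps)
  consider "dx=2" "dy=2" | "dx=2" "dy=4" | "dx=4" "dy=2" | "dx=4" "dy=4" using assms(1,2) by blast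
  then show ?thesis
  proof cases
    case 1
    then have "real dx * real dy = 4" by simp
    then show ?thesis using 1 s4 by (simp add: g_def)
  next
    case 2
    then have "real dx * real dy = 8" by simp
    then show ?thesis using 2 e24 by (simp add: g_def)
  next
    case 3
    then have "real dx * real dy = 8" by simp
    then show ?thesis using 3 e24 by (simp add: g_def add.commute)
  next
    case 4
    then have "real dx * real dy = 16" by simp
    then show ?thesis using 4 s16 q44 by (simp add: g_def)
  qed
qed

lemma edge_facts:
  fixes E :: "'a set set" and g :: "nat \<Rightarrow> real"
  assumes g_def: "g = (\<lambda>d::nat. if d = 4 then (sqrt 2 - 1) / 4 else (1/4::real))"
    and eq: "e = {x,y}" "x \<noteq> y"
    and dx: "degree E x = 2 \<or> degree E x = 4" and dy: "degree E y = 2 \<or> degree E y = 4"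
  shows "(\<Sum>v\<in>e. g (degree E v)) \<le> 1 / sqrt (\<Prod>v\<in>e. real (degree E v))"
    and "\<not> (degree E x = 4 \<and> degree E y = 4) \<Longrightarrow>
         (\<Sum>v\<in>e. g (degree E v)) = 1 / sqrt (\<Prod>v\<in>e. real (degree E v))"
proof -
  have S: "(\<Sum>v\<in>e. g (degree E v)) = g (degree E x) + g (degree E y)" using eq by simp
  have P: "(\<Prod>v\<in>e. real (degree E v)) = real (degree E x) * real (degree E y)" using eq by simp
  note ev = edge_val[OF dx dy]
  have A: "g (degree E x) + g (degree E y) \<le> 1 / sqrt (real (degree E x) * real (degree E y))"
    using ev by (simp add: g_def)
  show "(\<Sum>v\<in>e. g (degree E v)) \<le> 1 / sqrt (\<Prod>v\<in>e. real (degree E v))"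
    unfolding S P by (rule A)
  assume n4: "\<not> (degree E x = 4 \<and> degree E y = 4)"
  have B: "g (degree E x) + g (degree E y) = 1 / sqrt (real (degree E x) * real (degree E y))"
    using ev n4 by (simp add: g_def)
  show "(\<Sum>v\<in>e. g (degree E v)) = 1 / sqrt (\<Prod>v\<in>e. real (degree E v))"
    unfolding S P by (rule B)
qed

theorem corollary4p5:
  fixes V :: "'a set" and E :: "'a set set" and n k :: nat
  assumes "simple_graph V E"
    and "chemical V E"
    and "nontrivial_cactus V E"
    and "card V = n" and "n \<ge> 2"
    and "card (cycles E) = k"
  shows "randic E \<ge> real n / 2 - (real k - 1) * (3 / 2 - sqrt 2) \<and>
         ((\<forall>u\<in>V. \<forall>v\<in>V. adj E u v \<longrightarrow> \<not> (articulation_point V E u \<and> articulation_point V E v))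
         \<longrightarrow> randic E = real n / 2 - (real k - 1) * (3 / 2 - sqrt 2))"
proof -
  have finV: "finite V" and es: "\<forall>e\<in>E. e \<subseteq> V \<and> card e = 2"
    using assms(1) unfolding simple_graph_def by auto
  have "E \<subseteq> Pow V" using es by auto
  then have finE: "finite E" using finite_subset finV by (metis finite_Pow_iff)
  have conn: "connected_graph V E"
    and cact: "\<forall>C1\<in>cycles E. \<forall>C2\<in>cycles E. C1 \<noteq> C2 \<longrightarrow> card (\<Union>C1 \<inter> \<Union>C2) \<le> 1"
    and nobr: "\<forall>e\<in>E. \<not> is_bridge V E e"
    using assms(3) unfolding nontrivial_cactus_def cactus_def by auto
  define Cs where "Cs = cycles E"
  have "Cs \<subseteq> Pow E" by (auto simp: Cs_def cycles_def)
  then have finCs: "finite Cs" using finite_subset finE by (metis finite_Pow_iff)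
  have CsE: "C \<subseteq> E \<and> is_cycle C" if "C \<in> Cs" for C using that by (simp add: Cs_def cycles_def)
  have other: "\<exists>u\<in>V. u \<noteq> v" for v
  proof (rule ccontr)
    assume "\<not> (\<exists>u\<in>V. u \<noteq> v)"
    then have "V \<subseteq> {v}" by blast
    then have "card V \<le> card {v}" by (intro card_mono) auto
    then show False using assms(4,5) by simp
  qed
  have disj: "\<forall>C1\<in>Cs. \<forall>C2\<in>Cs. C1 \<noteq> C2 \<longrightarrow> C1 \<inter> C2 = {}"
  proof (intro ballI impI)
    fix C1 C2 assume c: "C1 \<in> Cs" "C2 \<in> Cs" "C1 \<noteq> C2"
    show "C1 \<inter> C2 = {}"
    proof (rule ccontr)
      assume "C1 \<inter> C2 \<noteq> {}"
      then obtain e where e: "e \<in> C1" "e \<in> C2" by blast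
      have "e \<in> E" using e c CsE by blast
      then have "card e = 2" using es by blast
      then obtain a b where ab: "e = {a,b}" "a \<noteq> b" unfolding card_2_iff by blast
      have sub: "{a,b} \<subseteq> \<Union>C1 \<inter> \<Union>C2" using e ab by blast
      have "\<Union>C1 \<subseteq> V" using c(1) CsE es by blast
      then have "\<Union>C1 \<inter> \<Union>C2 \<subseteq> V" by blast
      then have fin: "finite (\<Union>C1 \<inter> \<Union>C2)" using finite_subset finV by blast
      have "2 \<le> card (\<Union>C1 \<inter> \<Union>C2)" using card_mono[OF fin sub] ab by simp
      moreover have "card (\<Union>C1 \<inter> \<Union>C2) \<le> 1" using cact c Cs_def by auto
      ultimately show False by simp
    qed
  qed
  have cover: "\<exists>C\<in>Cs. e \<in> C" if eE: "e \<in> E" for e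
  proof -
    have "card e = 2" using es eE by blast
    then obtain u v where uv: "e = {u,v}" "u \<noteq> v" unfolding card_2_iff by blast
    have uvV: "u \<in> V" "v \<in> V" using es eE uv by auto
    have "connected_graph V (E - {e})" using nobr eE by (simp add: is_bridge_def)
    then have "reachable V (E - {e}) v u" using uvV by (simp add: connected_graph_def)
    then have "\<exists>xs. epath (E - {e}) xs \<and> xs \<noteq> [] \<and> hd xs = v \<and> last xs = u"
      by (rule reach_path)
    then obtain xs where xs: "epath (E - {e}) xs" "xs \<noteq> []" "hd xs = v" "last xs = u"
      by blast
    define l where "l = length xs"
    have l2: "l \<ge> 2"
    proof (rule ccontr)
      assume "\<not> l \<ge> 2"
      moreover have "0 < length xs" using xs(2) by simp
      ultimately have "length xs = 1" using l_def by linarith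
      then have "hd xs = last xs" by (cases xs) auto
      then show False using xs uv by simp
    qed
    have l3: "l \<ge> 3"
    proof (rule ccontr)
      assume "\<not> l \<ge> 3"
      then have l2': "l = 2" using l2 by simp
      then have "{xs!0, xs!Suc 0} \<in> E - {e}" using xs(1) l_def unfolding epath_def by auto
      moreover have "xs!0 = v" using xs(2,3) by (simp add: hd_conv_nth)
      moreover have "xs!Suc 0 = u" using xs(2,4) l2' l_def by (simp add: last_conv_nth)
      ultimately show False using uv by (auto simp: insert_commute)
    qed
    have epE: "epath E xs" using xs(1) unfolding epath_def by auto
    have lh: "{last xs, hd xs} \<in> E" using xs uv eE by simp
    have cE: "cyc xs \<subseteq> E" using cyc_sub[OF epE _ lh] l2 l_def by simp
    have cyc: "is_cycle (cyc xs)" using xs(1) l3 l_def by (intro cyc_is_cycle) (auto simp: epath_def)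
    have "e \<in> cyc xs"
    proof -
      have lt: "l - 1 < l" using l2 by simp
      have m0: "Suc (l-1) mod l = 0" using l2 by simp
      have "xs!(l-1) = u" using xs(2,4) l_def by (simp add: last_conv_nth)
      moreover have "xs!0 = v" using xs(2,3) by (simp add: hd_conv_nth)
      ultimately have "e = {xs!(l-1), xs!(Suc (l-1) mod l)}" using uv m0 by simp
      then show ?thesis using lt unfolding cyc_def l_def by blast
    qed
    then show ?thesis using cE cyc unfolding Cs_def cycles_def by blast
  qed
  have degC: "degree C v = (if v \<in> \<Union>C then 2 else 0)" if "C \<in> Cs" for C v
  proof (cases "v \<in> \<Union>C")
    case True then show ?thesis using CsE[OF that] unfolding is_cycle_def by auto
  next
    case False
    then have "{e\<in>C. v\<in>e} = {}" by blast
    then have "degree C v = 0" unfolding degree_def by (simp only: card.empty)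
    then show ?thesis using False by simp
  qed
  have degE: "degree E v = 2 * card {C\<in>Cs. v \<in> \<Union>C}" for v
  proof -
    have "{e\<in>E. v\<in>e} = (\<Union>C\<in>Cs. {e\<in>C. v\<in>e})"
    proof
      show "{e\<in>E. v\<in>e} \<subseteq> (\<Union>C\<in>Cs. {e\<in>C. v\<in>e})" using cover by blast
      show "(\<Union>C\<in>Cs. {e\<in>C. v\<in>e}) \<subseteq> {e\<in>E. v\<in>e}" using CsE by blast
    qed
    then have "degree E v = card (\<Union>C\<in>Cs. {e\<in>C. v\<in>e})" by (simp add: degree_def)
    also have "\<dots> = (\<Sum>C\<in>Cs. card {e\<in>C. v\<in>e})"
    proof (rule card_UN_disjoint)
      show "finite Cs" by (rule finCs)
      show "\<forall>C\<in>Cs. finite {e\<in>C. v\<in>e}"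
      proof
        fix C assume "C \<in> Cs"
        then have "C \<subseteq> E" using CsE by blast
        then have "{e\<in>C. v\<in>e} \<subseteq> E" by blast
        then show "finite {e\<in>C. v\<in>e}" using finE by (rule finite_subset)
      qed
      show "\<forall>C1\<in>Cs. \<forall>C2\<in>Cs. C1 \<noteq> C2 \<longrightarrow> {e\<in>C1. v\<in>e} \<inter> {e\<in>C2. v\<in>e} = {}"
        using disj by blast
    qed
    also have "\<dots> = (\<Sum>C\<in>Cs. if v \<in> \<Union>C then 2 else 0)"
    proof (rule sum.cong[OF refl])
      fix C assume "C \<in> Cs"
      then show "card {e\<in>C. v\<in>e} = (if v \<in> \<Union>C then 2 else 0)"
        using degC[of C v] by (simp add: degree_def)
    qed
    also have "\<dots> = (\<Sum>C\<in>{C\<in>Cs. v \<in> \<Union>C}. 2)"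
      using finCs by (rule sum.inter_filter[symmetric])
    also have "\<dots> = 2 * card {C\<in>Cs. v \<in> \<Union>C}" by simp
    finally show ?thesis .
  qed
  have deg_pos: "degree E v \<ge> 1" if vV: "v \<in> V" for v
  proof -
    obtain u where u: "u \<in> V" "u \<noteq> v" using other[of v] by blast
    then have "reachable V E v u" using conn vV by (simp add: connected_graph_def)
    then have R: "(\<lambda>x y. x \<in> V \<and> y \<in> V \<and> adj E x y)\<^sup>*\<^sup>* v u" unfolding reachable_def .
    obtain w where "adj E v w"
    proof (rule converse_rtranclpE[OF R])
      assume "v = u" then show ?thesis using u(2) by simp
    next
      fix w assume h: "v \<in> V \<and> w \<in> V \<and> adj E v w"
      show ?thesis using h that by blast
    qed
    then have "{v,w} \<in> {e\<in>E. v\<in>e}" by (simp add: adj_def)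
    then have "{e\<in>E. v\<in>e} \<noteq> {}" by blast
    then show ?thesis using finE by (simp add: degree_def card_gt_0_iff Suc_le_eq)
  qed
  have deg24: "degree E v = 2 \<or> degree E v = 4" if vV: "v\<in>V" for v
  proof -
    have "degree E v \<le> 4" using assms(2) vV unfolding chemical_def by blast
    moreover have "degree E v \<ge> 1" using deg_pos[OF vV] .
    moreover note degE[of v]
    ultimately have "card {C\<in>Cs. v \<in> \<Union>C} = 1 \<or> card {C\<in>Cs. v \<in> \<Union>C} = 2" by presburger
    then show ?thesis using degE[of v] by auto
  qed
  have count: "n + k = card E + 1"
    using cyc_count[OF finV es conn] disj assms(4,6) unfolding Cs_def by simp
  have hand: "(\<Sum>v\<in>V. degree E v) = 2 * card E"
  proof -
    have "(\<Sum>v\<in>V. of_nat (degree E v) * (1::nat)) = (\<Sum>e\<in>E. \<Sum>v\<in>V\<inter>e. (1::nat))"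
      using double_count[OF finV finE, where h="\<lambda>_. 1::nat"] .
    also have "\<dots> = (\<Sum>e\<in>E. 2)"
    proof (rule sum.cong[OF refl])
      fix e assume "e \<in> E"
      then have "V \<inter> e = e" "card e = 2" using es by auto
      then show "(\<Sum>v\<in>V\<inter>e. (1::nat)) = 2" by simp
    qed
    finally show ?thesis by simp
  qed
  define B where "B = {v\<in>V. degree E v = 4}"
  have degsplit: "(\<Sum>v\<in>V. degree E v) = 2 * n + 2 * card B"
  proof -
    have "(\<Sum>v\<in>V. degree E v) = (\<Sum>v\<in>V. 2 + (if v \<in> B then 2 else 0))"
    proof (rule sum.cong[OF refl])
      fix v assume "v \<in> V"
      then show "degree E v = 2 + (if v \<in> B then 2 else 0)" using deg24[of v] B_def by auto
    qed
    also have "\<dots> = (\<Sum>v\<in>V. 2) + (\<Sum>v\<in>V. if v \<in> B then 2 else 0)"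
      by (rule sum.distrib)
    also have "(\<Sum>v\<in>V. (2::nat)) = 2 * card V" by simp
    also have "(\<Sum>v\<in>V. if v \<in> B then 2 else (0::nat)) = (\<Sum>v\<in>{v\<in>V. v \<in> B}. 2)"
      using finV by (rule sum.inter_filter[symmetric])
    also have "{v\<in>V. v \<in> B} = B" using B_def by auto
    finally show ?thesis using assms(4) by simp
  qed
  have mE: "card E = n + card B" using hand degsplit by simp
  have kB: "k = card B + 1" using count mE by simp
  have art: "articulation_point V E v" if vV: "v \<in> V" and d4: "degree E v = 4" for v
  proof (rule ccontr)
    assume na: "\<not> articulation_point V E v"
    define W where "W = V - {v}"
    define Fv where "Fv = {e\<in>E. v \<notin> e}"
    have reachW: "\<forall>x\<in>W. \<forall>y\<in>W. reachable W Fv x y"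
      using na vV unfolding articulation_point_def W_def Fv_def by blast
    obtain u where "u \<in> V" "u \<noteq> v" using other[of v] by blast
    then have Wne: "W \<noteq> {}" using W_def by blast
    have connW: "connected_graph W Fv" using reachW Wne by (simp add: connected_graph_def)
    have esW: "\<forall>e\<in>Fv. e \<subseteq> W \<and> card e = 2" using es unfolding Fv_def W_def by blast
    have cycFv: "cycles Fv = {C\<in>Cs. v \<notin> \<Union>C}" unfolding cycles_def Cs_def Fv_def by blast
    have disjW: "\<forall>C1\<in>cycles Fv. \<forall>C2\<in>cycles Fv. C1 \<noteq> C2 \<longrightarrow> C1 \<inter> C2 = {}"
      using disj unfolding cycFv by blast
    have finW: "finite W" using finV W_def by simp
    have cc: "card W + card (cycles Fv) = card Fv + 1" by (rule cyc_count[OF finW esW connW disjW])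
    have cW: "card W + 1 = n" using W_def vV finV assms(4,5) by simp
    have "Fv = E - {e\<in>E. v\<in>e}" using Fv_def by blast
    moreover have "card {e\<in>E. v\<in>e} = 4" using d4 by (simp add: degree_def)
    moreover have "card {e\<in>E. v\<in>e} \<le> card E" using finE by (intro card_mono) auto
    ultimately have cFv: "card Fv + 4 = card E" using finE by (simp add: card_Diff_subset)
    have cnt2: "card {C\<in>Cs. v \<in> \<Union>C} = 2" using degE[of v] d4 by simp
    have "cycles Fv = Cs - {C\<in>Cs. v \<in> \<Union>C}" using cycFv by blast
    moreover have "card {C\<in>Cs. v \<in> \<Union>C} \<le> card Cs" using finCs by (intro card_mono) auto
    ultimately have cCy: "card (cycles Fv) + 2 = k" using finCs cnt2 assms(6) Cs_def
      by (simp add: card_Diff_subset)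
    show False using cc cW cFv cCy count by linarith
  qed
  define g where "g = (\<lambda>d::nat. if d = 4 then (sqrt 2 - 1) / 4 else (1/4::real))"
  have sumg: "(\<Sum>e\<in>E. \<Sum>v\<in>e. g (degree E v)) = (\<Sum>v\<in>V. real (degree E v) * g (degree E v))"
  proof -
    have "(\<Sum>v\<in>V. of_nat (degree E v) * g (degree E v)) = (\<Sum>e\<in>E. \<Sum>v\<in>V\<inter>e. g (degree E v))"
      using double_count[OF finV finE, where h="\<lambda>v. g (degree E v)"] .
    also have "\<dots> = (\<Sum>e\<in>E. \<Sum>v\<in>e. g (degree E v))"
    proof (rule sum.cong[OF refl])
      fix e assume "e \<in> E"
      then have "V \<inter> e = e" using es by auto
      then show "(\<Sum>v\<in>V\<inter>e. g (degree E v)) = (\<Sum>v\<in>e. g (degree E v))" by simp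
    qed
    finally show ?thesis by simp
  qed
  have sumV: "(\<Sum>v\<in>V. real (degree E v) * g (degree E v)) = real n / 2 - (real k - 1) * (3 / 2 - sqrt 2)"
  proof -
    have "(\<Sum>v\<in>V. real (degree E v) * g (degree E v)) = (\<Sum>v\<in>V. 1/2 + (if v \<in> B then sqrt 2 - 3/2 else 0))"
    proof (rule sum.cong[OF refl])
      fix v assume "v \<in> V"
      then show "real (degree E v) * g (degree E v) = 1/2 + (if v \<in> B then sqrt 2 - 3/2 else 0)"
        using deg24[of v] B_def g_def by auto
    qed
    also have "\<dots> = real (card V) / 2 + (\<Sum>v\<in>V. if v \<in> B then sqrt 2 - 3/2 else 0)"
      by (simp add: sum.distrib)
    also have "(\<Sum>v\<in>V. if v \<in> B then sqrt 2 - 3/2 else (0::real)) = (\<Sum>v\<in>{v\<in>V. v \<in> B}. sqrt 2 - 3/2)"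
      using finV by (rule sum.inter_filter[symmetric])
    also have "{v\<in>V. v \<in> B} = B" using B_def by auto
    finally have "(\<Sum>v\<in>V. real (degree E v) * g (degree E v)) = real n / 2 + real (card B) * (sqrt 2 - 3/2)"
      using assms(4) by simp
    moreover have "real k - 1 = real (card B)" using kB by simp
    ultimately show ?thesis by (simp add: algebra_simps)
  qed
  have edgeinfo: "\<exists>x y. e = {x,y} \<and> x \<noteq> y \<and> x \<in> V \<and> y \<in> V" if "e \<in> E" for e
  proof -
    have "card e = 2" using es that by blast
    then obtain x y where "e = {x,y}" "x \<noteq> y" unfolding card_2_iff by blast
    moreover have "e \<subseteq> V" using es that by blast
    ultimately show ?thesis by blast
  qed
  have le: "(\<Sum>v\<in>e. g (degree E v)) \<le> 1 / sqrt (\<Prod>v\<in>e. real (degree E v))" if eE: "e \<in> E" for e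
  proof -
    obtain x y where xy: "e = {x,y}" "x \<noteq> y" "x \<in> V" "y \<in> V" using edgeinfo[OF eE] by blast
    show ?thesis by (rule edge_facts(1)[OF g_def xy(1,2) deg24[OF xy(3)] deg24[OF xy(4)]])
  qed
  have part1: "randic E \<ge> real n / 2 - (real k - 1) * (3 / 2 - sqrt 2)"
  proof -
    have "real n / 2 - (real k - 1) * (3 / 2 - sqrt 2) = (\<Sum>e\<in>E. \<Sum>v\<in>e. g (degree E v))"
      using sumg sumV by simp
    also have "\<dots> \<le> randic E" unfolding randic_def using le by (rule sum_mono)
    finally show ?thesis .
  qed
  have part2: "randic E = real n / 2 - (real k - 1) * (3 / 2 - sqrt 2)"
    if H: "\<forall>u\<in>V. \<forall>v\<in>V. adj E u v \<longrightarrow> \<not> (articulation_point V E u \<and> articulation_point V E v)"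
  proof -
    have eqe: "(\<Sum>v\<in>e. g (degree E v)) = 1 / sqrt (\<Prod>v\<in>e. real (degree E v))" if eE: "e \<in> E" for e
    proof -
      obtain x y where xy: "e = {x,y}" "x \<noteq> y" "x \<in> V" "y \<in> V" using edgeinfo[OF eE] by blast
      have "adj E x y" using xy eE by (simp add: adj_def)
      then have "\<not> (degree E x = 4 \<and> degree E y = 4)" using H xy art by blast
      then show ?thesis by (rule edge_facts(2)[OF g_def xy(1,2) deg24[OF xy(3)] deg24[OF xy(4)]])
    qed
    have "randic E = (\<Sum>e\<in>E. \<Sum>v\<in>e. g (degree E v))"
      unfolding randic_def using eqe by (intro sum.cong) auto
    then show ?thesis using sumg sumV by simp
  qed
  show ?thesis using part1 part2 by blast
qed

end
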